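(* Let $\alpha,\beta\in\mathbb{R}$ with $\alpha\neq 0$. Consider a linear pentapod with planar base, normalized as in the context, whose architecture parameters satisfy $r_l=\alpha x_l+\beta y_l$ for $l=1,\dots,5$ and $x_2=1/\alpha$. Then, as a polynomial in $u_1,\dots,u_6$, $$\det(S)=c\cdot u_3\bigl[u_6(\alpha u_1+\beta u_2-1)-u_3(\alpha u_4+\beta u_5)\bigr]$$ for some real constant $c$ depending only on the architecture parameters. In particular, whenever $c\ne 0$, the singularity variety $\{\det S=0\}\subset\mathbb{R}^6$ is the zero set of $u_3\bigl[u_6(\alpha u_1+\beta u_2-1)-u_3(\alpha u_4+\beta u_5)\bigr]$.
   Context: A linear pentapod has five legs joining base anchor points $M_l=(x_l,y_l,0)\in\mathbb{R}^3$ (planar base) to platform anchor points $m_l=\vec p+r_l\vec i$, $l=1,\dots,5$, lying on a line, where $\vec i=(u_1,u_2,u_3)$ is the direction of the platform line and $\vec p=(u_4,u_5,u_6)$ its position; a pose is a point $(u_1,\dots,u_6)\in\mathbb{R}^6$. Coordinates are normalized so that $M_1=(0,0,0)$, $r_1=0$, $M_2=(x_2,0,0)$, $r_2=1$. The singular poses are the zeros of $\det S$, where $S$ is the $7\times 7$ matrix whose rows are $(1,u_1,u_2,u_3,u_4,u_5,u_6)$, $(0,u_4,u_5,u_6,0,0,0)$, $(0,0,0,0,u_1,u_2,u_3)$, and, for $l=2,3,4,5$, $(r_l,x_l,y_l,0,r_lx_l,r_ly_l,0)$. *)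

theory Defs
  imports "Jordan_Normal_Form.Determinant"
begin

definition leg_row :: "(nat \<Rightarrow> real) \<Rightarrow> (nat \<Rightarrow> real) \<Rightarrow> (nat \<Rightarrow> real) \<Rightarrow> nat \<Rightarrow> real list" where
  "leg_row x y r l = [r l, x l, y l, 0, r l * x l, r l * y l, 0]"

definition pentapod_S :: "(nat \<Rightarrow> real) \<Rightarrow> (nat \<Rightarrow> real) \<Rightarrow> (nat \<Rightarrow> real) \<Rightarrow>
    real \<Rightarrow> real \<Rightarrow> real \<Rightarrow> real \<Rightarrow> real \<Rightarrow> real \<Rightarrow> real mat" where
  "pentapod_S x y r u1 u2 u3 u4 u5 u6 = mat_of_rows_list 7
     [[1, u1, u2, u3, u4, u5, u6],
      [0, u4, u5, u6, 0, 0, 0],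
      [0, 0, 0, 0, u1, u2, u3],
      leg_row x y r 2, leg_row x y r 3, leg_row x y r 4, leg_row x y r 5]"

end

theory Submission imports Defs begin

lemma lap:
  fixes f :: "nat \<times> nat \<Rightarrow> 'a::comm_ring_1"
  assumes "j < Suc n"
  shows "det (mat (Suc n) (Suc n) f) = (\<Sum>i<Suc n. f (i,j) * (-1)^(i+j) *
     det (mat n n (\<lambda>(i',j'). f (if i'<i then i' else Suc i', if j'<j then j' else Suc j'))))"
proof -
  have "det (mat (Suc n) (Suc n) f) = (\<Sum>i<Suc n. mat (Suc n) (Suc n) f $$ (i,j) * cofactor (mat (Suc n) (Suc n) f) i j)"
    by (rule laplace_expansion_column) (use assms in auto)
  also have "\<dots> = (\<Sum>i<Suc n. f (i,j) * (-1)^(i+j) *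
     det (mat n n (\<lambda>(i',j'). f (if i'<i then i' else Suc i', if j'<j then j' else Suc j'))))"
  proof (rule sum.cong[OF refl])
    fix i assume "i \<in> {..<Suc n}"
    hence "mat_delete (mat (Suc n) (Suc n) f) i j = mat n n (\<lambda>(i',j'). f (if i'<i then i' else Suc i', if j'<j then j' else Suc j'))"
      using assms by (intro eq_matI) (auto simp: mat_delete_def)
    then show "mat (Suc n) (Suc n) f $$ (i,j) * cofactor (mat (Suc n) (Suc n) f) i j = f (i,j) * (-1)^(i+j) *
     det (mat n n (\<lambda>(i',j'). f (if i'<i then i' else Suc i', if j'<j then j' else Suc j')))"
      using assms \<open>i \<in> _\<close> by (simp add: cofactor_def)
  qed
  finally show ?thesis .
qed


lemma lap':
  fixes f :: "nat \<times> nat \<Rightarrow> 'a::comm_ring_1"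
  assumes "m = Suc n" "j < m"
  shows "det (mat m m f) = (\<Sum>i<m. f (i,j) * (-1)^(i+j) *
     det (mat n n (\<lambda>(i',j'). f (if i'<i then i' else Suc i', if j'<j then j' else Suc j'))))"
  using lap[of j n f] assms by simp

lemma sum3: "(\<Sum>i<(3::nat). g i) = g 0 + g 1 + (g 2::'a::comm_monoid_add)"
  by (simp add: eval_nat_numeral)


lemma sum7: "(\<Sum>i<(7::nat). g i) = g 0 + g 1 + g 2 + g 3 + g 4 + g 5 + (g 6::'a::comm_monoid_add)"
  by (simp add: eval_nat_numeral)
lemma sum6: "(\<Sum>i<(6::nat). g i) = g 0 + g 1 + g 2 + g 3 + g 4 + (g 5::'a::comm_monoid_add)"
  by (simp add: eval_nat_numeral)
lemma sum5: "(\<Sum>i<(5::nat). g i) = g 0 + g 1 + g 2 + g 3 + (g 4::'a::comm_monoid_add)"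
  by (simp add: eval_nat_numeral)


lemma minor4: "mat 4 4
           (\<lambda>(i', j').
               [[0, x2, y2, 0, a2, b2, 0], [0, x3, y3, 0, a3, b3, 0],
                [0, x4, y4, 0, a4, b4, 0], [0, x5, y5, 0, a5, b5, 0]] !
               i' !
               (if (if j' < 2 then Suc j' else Suc (Suc j')) < 6
                then if Suc j' < 3 then Suc j' else Suc (Suc j')
                else Suc (if Suc j' < 3 then Suc j' else Suc (Suc j')))) =
   mat 4 4 (\<lambda>(i,j). [[x2,y2,a2,b2],[x3,y3,a3,b3],[x4,y4,a4,b4],[x5,y5,a5,b5::real]] ! i ! j)"
  by (rule eq_matI) (auto simp: less_Suc_eq numeral_eq_Suc)

lemma det7: "det (mat 7 7 (\<lambda>(i,j). [[p,u1,u2,u3,u4,u5,u6],[q,u4,u5,u6,0,0,0],[0,0,0,0,u1,u2,u3],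
   [0,x2,y2,0,a2,b2,0],[0,x3,y3,0,a3,b3,0],[0,x4,y4,0,a4,b4,0],[0,x5::real,y5,0,a5,b5,0]] ! i ! j))
  = det (mat 4 4 (\<lambda>(i,j). [[x2,y2,a2,b2],[x3,y3,a3,b3],[x4,y4,a4,b4],[x5,y5,a5,b5]] ! i ! j)) * u3 * (u6 * p - u3 * q)"
  apply (subst lap'[where n=6 and j=6], simp, simp)
  apply (simp add: sum7)
  apply (subst lap'[where n=5 and j=3], simp, simp)+
  apply (simp add: sum6)
  apply (subst lap'[where n=4 and j=0], simp, simp)+
  apply (simp add: sum5 minor4)
  apply (simp add: algebra_simps)
  done

theorem mainTheorem2:
  fixes x y r :: "nat \<Rightarrow> real" and \<alpha> \<beta> :: real
  assumes "\<alpha> \<noteq> 0"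
    and "x 1 = 0" and "y 1 = 0" and "r 1 = 0"
    and "y 2 = 0" and "r 2 = 1"
    and "\<forall>l\<in>{1..5}. r l = \<alpha> * x l + \<beta> * y l"
    and "x 2 = 1 / \<alpha>"
  shows "\<exists>c::real.
     (\<forall>u1 u2 u3 u4 u5 u6.
        det (pentapod_S x y r u1 u2 u3 u4 u5 u6)
        = c * u3 * (u6 * (\<alpha> * u1 + \<beta> * u2 - 1) - u3 * (\<alpha> * u4 + \<beta> * u5))) \<and>
     (c \<noteq> 0 \<longrightarrow>
        {(u1, u2, u3, u4, u5, u6). det (pentapod_S x y r u1 u2 u3 u4 u5 u6) = 0}
        = {(u1, u2, u3, u4, u5, u6).
             u3 * (u6 * (\<alpha> * u1 + \<beta> * u2 - 1) - u3 * (\<alpha> * u4 + \<beta> * u5)) = 0})"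
proof -
  have r2: "r 2 = \<alpha> * x 2 + \<beta> * y 2" and r3: "r 3 = \<alpha> * x 3 + \<beta> * y 3"
    and r4: "r 4 = \<alpha> * x 4 + \<beta> * y 4" and r5: "r 5 = \<alpha> * x 5 + \<beta> * y 5"
    using assms(7) by auto
  define D where "D = det (mat 4 4 (\<lambda>(i,j). [[x 2, y 2, r 2 * x 2, r 2 * y 2],
     [x 3, y 3, r 3 * x 3, r 3 * y 3],[x 4, y 4, r 4 * x 4, r 4 * y 4],[x 5, y 5, r 5 * x 5, r 5 * y 5]] ! i ! j))"
  have key: "det (pentapod_S x y r u1 u2 u3 u4 u5 u6)
        = (-D) * u3 * (u6 * (\<alpha> * u1 + \<beta> * u2 - 1) - u3 * (\<alpha> * u4 + \<beta> * u5))"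
    for u1 u2 u3 u4 u5 u6
  proof -
    let ?S = "pentapod_S x y r u1 u2 u3 u4 u5 u6"
    have S: "?S \<in> carrier_mat 7 7"
      unfolding pentapod_S_def mat_of_rows_list_def by (simp add: eval_nat_numeral)
    have "det ?S = det (addcol (-\<beta>) 0 2 (addcol (-\<alpha>) 0 1 ?S))"
    proof -
      have S1: "addcol (-\<alpha>) 0 1 ?S \<in> carrier_mat 7 7" using S by (simp add: mat_addcol_def)
      have "det (addcol (-\<beta>) 0 2 (addcol (-\<alpha>) 0 1 ?S)) = det (addcol (-\<alpha>) 0 1 ?S)"
        by (rule det_addcol[OF _ _ S1]) auto
      also have "\<dots> = det ?S" by (rule det_addcol[OF _ _ S]) auto
      finally show ?thesis by simp
    qed
    also have "addcol (-\<beta>) 0 2 (addcol (-\<alpha>) 0 1 ?S) =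
      mat 7 7 (\<lambda>(i,j). [[1 - \<alpha> * u1 - \<beta> * u2,u1,u2,u3,u4,u5,u6],
         [-(\<alpha> * u4 + \<beta> * u5),u4,u5,u6,0,0,0],[0,0,0,0,u1,u2,u3],
   [0,x 2,y 2,0,r 2 * x 2,r 2 * y 2,0],[0,x 3,y 3,0,r 3 * x 3,r 3 * y 3,0],
   [0,x 4,y 4,0,r 4 * x 4,r 4 * y 4,0],[0,x 5,y 5,0,r 5 * x 5,r 5 * y 5,0]] ! i ! j)"
      apply (rule eq_matI)
      apply (auto simp: pentapod_S_def mat_of_rows_list_def leg_row_def mat_addcol_def less_Suc_eq numeral_eq_Suc)
      using r2 r3 r4 r5 by (simp_all add: numeral_eq_Suc)
    also have "det \<dots> = D * u3 * (u6 * (1 - \<alpha> * u1 - \<beta> * u2) - u3 * (-(\<alpha> * u4 + \<beta> * u5)))"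
      unfolding D_def by (rule det7)
    finally show ?thesis by (simp add: algebra_simps)
  qed
  show ?thesis
  proof (intro exI conjI impI allI)
    show "det (pentapod_S x y r u1 u2 u3 u4 u5 u6)
        = (-D) * u3 * (u6 * (\<alpha> * u1 + \<beta> * u2 - 1) - u3 * (\<alpha> * u4 + \<beta> * u5))"
      for u1 u2 u3 u4 u5 u6 by (rule key)
    assume "-D \<noteq> 0"
    then show "{(u1, u2, u3, u4, u5, u6). det (pentapod_S x y r u1 u2 u3 u4 u5 u6) = 0}
        = {(u1, u2, u3, u4, u5, u6).
             u3 * (u6 * (\<alpha> * u1 + \<beta> * u2 - 1) - u3 * (\<alpha> * u4 + \<beta> * u5)) = 0}"
      by (auto simp: key)
  qed
qed

end
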